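(* Let $\nu_0=0$ and $s,\gamma,u>0$. Let $y(t;y_0)$ be the solution of $\dot y=F(y)$, $y(0)=y_0\in[0,1]$, where $F(y)=-y(1-y)[s+\gamma(1-y)]+u(1-y)$, and set $y_\infty(y_0)=\lim_{t\to\infty}y(t;y_0)$. (i) If $0<u<s$, or if $u=s$ and $s<\gamma$, then $y_\infty(y_0)=\bar y_2$ for $y_0\in[0,1)$ and $y_\infty(1)=\bar y_1$. (ii) If $s<\gamma$ and $s<u\le\check u$, then $y_\infty(y_0)=\bar y_2$ for $y_0\in[0,\bar y_3)$, $y_\infty(\bar y_3)=\bar y_3$, and $y_\infty(y_0)=\bar y_1$ for $y_0\in(\bar y_3,\bar y_1]$. (iii) If $u>\check u$, or if $s\ge\gamma$ and $s\le u\le\check u$, then $y_\infty(y_0)=\bar y_1$ for all $y_0\in[0,1]$.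
   Context: Here $\check u=\frac1\gamma\big(\frac{s+\gamma}2\big)^2$, $\bar y_1=1$, $\sigma=(1+s/\gamma)^2-4u/\gamma$, and, whenever $\sigma\ge 0$, $\bar y_2=\frac12(1+\frac s\gamma-\sqrt\sigma)$ and $\bar y_3=\frac12(1+\frac s\gamma+\sqrt\sigma)$. The limit $y_\infty(y_0)$ exists because $t\mapsto y(t;y_0)$ is monotone. *)

theory Defs
  imports "HOL-Analysis.Analysis"
begin

definition Fode :: "real \<Rightarrow> real \<Rightarrow> real \<Rightarrow> real \<Rightarrow> real" where
  "Fode s \<gamma> u y = - y * (1 - y) * (s + \<gamma> * (1 - y)) + u * (1 - y)"

definition ucheck :: "real \<Rightarrow> real \<Rightarrow> real" where
  "ucheck s \<gamma> = (1 / \<gamma>) * ((s + \<gamma>) / 2)^2"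

definition sigma :: "real \<Rightarrow> real \<Rightarrow> real \<Rightarrow> real" where
  "sigma s \<gamma> u = (1 + s / \<gamma>)^2 - 4 * u / \<gamma>"

definition ybar1 :: real where "ybar1 = 1"

definition ybar2 :: "real \<Rightarrow> real \<Rightarrow> real \<Rightarrow> real" where
  "ybar2 s \<gamma> u = (1 / 2) * (1 + s / \<gamma> - sqrt (sigma s \<gamma> u))"

definition ybar3 :: "real \<Rightarrow> real \<Rightarrow> real \<Rightarrow> real" where
  "ybar3 s \<gamma> u = (1 / 2) * (1 + s / \<gamma> + sqrt (sigma s \<gamma> u))"

definition is_solution :: "real \<Rightarrow> real \<Rightarrow> real \<Rightarrow> real \<Rightarrow> (real \<Rightarrow> real) \<Rightarrow> bool" where
  "is_solution s \<gamma> u y0 y \<longleftrightarrow> y 0 = y0 \<and>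
     (\<forall>t\<ge>0. (y has_real_derivative Fode s \<gamma> u (y t)) (at t within {0..}))"

end

theory Submission imports Defs begin

lemma sol_basic:
  fixes y f :: "real \<Rightarrow> real"
  assumes "\<forall>t\<ge>0. (y has_real_derivative f (y t)) (at t within {0..})"
  shows "continuous_on {0..} y" and "\<And>t. t > 0 \<Longrightarrow> (y has_real_derivative f (y t)) (at t)"
proof -
  show "continuous_on {0..} y"
    unfolding continuous_on_eq_continuous_within
  proof
    fix t :: real assume "t \<in> {0..}"
    then show "continuous (at t within {0..}) y" using assms DERIV_continuous by blast
  qed
  fix t :: real assume "t > 0"
  then have "at t within {0..} = at t"
    by (intro at_within_interior) simp
  then show "(y has_real_derivative f (y t)) (at t)"
    using assms \<open>t > 0\<close> by (metis less_eq_real_def)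
qed

lemma uniq:
  fixes y f h :: "real \<Rightarrow> real"
  assumes cy: "continuous_on {0..} y"
    and dy: "\<And>t. t > 0 \<Longrightarrow> (y has_real_derivative f (y t)) (at t)"
    and ch: "continuous_on UNIV h" and fe: "\<And>x. f x = (x - e) * h x"
    and T: "T \<ge> 0"
  shows "y 0 = e \<longleftrightarrow> y T = e"
proof -
  have cyT: "continuous_on {0..T} y" using cy by (rule continuous_on_subset) auto
  have "compact ((\<lambda>t. h (y t)) ` {0..T})"
    by (intro compact_continuous_image continuous_on_compose2[OF ch cyT]) auto
  then obtain M where M: "\<And>t. t \<in> {0..T} \<Longrightarrow> \<bar>h (y t)\<bar> \<le> M"
    using compact_imp_bounded bounded_iff by (metis image_eqI real_norm_def)
  define z where "z t = (y t - e)^2" for t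
  have dz: "(z has_real_derivative 2 * z t * h (y t)) (at t)" if "t > 0" for t
  proof -
    have "(z has_real_derivative 2 * (y t - e) * f (y t)) (at t)"
      unfolding z_def using dy[OF that] by (auto intro!: derivative_eq_intros)
    then show ?thesis unfolding z_def fe by (simp add: power2_eq_square algebra_simps)
  qed
  have cz: "continuous_on {0..T} z" unfolding z_def by (intro continuous_intros cyT)
  have p: "z T * exp (-(2*M*T)) \<le> z 0 * exp (-(2*M*0))"
  proof (rule DERIV_nonpos_imp_decreasing_open[OF T, of "\<lambda>t. z t * exp (-(2*M*t))"])
    fix t assume t: "0 < t" "t < T"
    have "((\<lambda>t. z t * exp (-(2*M*t))) has_real_derivative
        2 * z t * h (y t) * exp (-(2*M*t)) + z t * (exp (-(2*M*t)) * (-(2*M)))) (at t)"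
      using dz[of t] t by (auto intro!: derivative_eq_intros)
    moreover have "2 * z t * h (y t) * exp (-(2*M*t)) + z t * (exp (-(2*M*t)) * (-(2*M))) \<le> 0"
    proof -
      have "z t * h (y t) \<le> z t * M" using M[of t] t unfolding z_def
        by (intro mult_left_mono) auto
      then have "2 * z t * h (y t) + z t * (-(2*M)) \<le> 0" by simp
      then have "(2 * z t * h (y t) + z t * (-(2*M))) * exp (-(2*M*t)) \<le> 0"
        by (simp add: mult_nonpos_nonneg)
      then show ?thesis by (simp add: algebra_simps)
    qed
    ultimately show "\<exists>d. ((\<lambda>t. z t * exp (-(2*M*t))) has_real_derivative d) (at t) \<and> d \<le> 0" by blast
  qed (intro continuous_intros cz)
  have q: "z 0 * exp (2*M*0) \<le> z T * exp (2*M*T)"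
  proof (rule DERIV_nonneg_imp_increasing_open[OF T, of "\<lambda>t. z t * exp (2*M*t)"])
    fix t assume t: "0 < t" "t < T"
    have "((\<lambda>t. z t * exp (2*M*t)) has_real_derivative
        2 * z t * h (y t) * exp (2*M*t) + z t * (exp (2*M*t) * (2*M))) (at t)"
      using dz[of t] t by (auto intro!: derivative_eq_intros)
    moreover have "2 * z t * h (y t) * exp (2*M*t) + z t * (exp (2*M*t) * (2*M)) \<ge> 0"
    proof -
      have "z t * (-h (y t)) \<le> z t * M" using M[of t] t unfolding z_def
        by (intro mult_left_mono) auto
      then have "2 * z t * h (y t) + z t * (2*M) \<ge> 0" by simp
      then have "(2 * z t * h (y t) + z t * (2*M)) * exp (2*M*t) \<ge> 0"
        by simp
      then show ?thesis by (simp add: algebra_simps)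
    qed
    ultimately show "\<exists>d. ((\<lambda>t. z t * exp (2*M*t)) has_real_derivative d) (at t) \<and> d \<ge> 0" by blast
  qed (intro continuous_intros cz)
  have z0: "z 0 \<ge> 0" "z T \<ge> 0" unfolding z_def by auto
  have "z 0 = 0 \<longleftrightarrow> z T = 0"
  proof
    assume "z 0 = 0" then show "z T = 0" using p z0
      by (metis exp_gt_zero mult_eq_0_iff mult_zero_left order_antisym zero_le_mult_iff zero_less_mult_iff linorder_not_le mult.commute)
  next
    assume "z T = 0" then show "z 0 = 0" using q z0 by simp
  qed
  then show ?thesis unfolding z_def by simp
qed

lemma conv_up:
  fixes y f :: "real \<Rightarrow> real"
  assumes cy: "continuous_on {0..} y"
    and dy: "\<And>t. t > 0 \<Longrightarrow> (y has_real_derivative f (y t)) (at t)"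
    and cf: "continuous_on UNIV f"
    and pos: "\<And>x. a < x \<Longrightarrow> x < b \<Longrightarrow> f x > 0"
    and rng: "\<And>t. t \<ge> 0 \<Longrightarrow> y t < b"
    and nn: "\<And>t. t \<ge> 0 \<Longrightarrow> f (y t) \<ge> 0"
    and a0: "a < y 0"
  shows "(y \<longlongrightarrow> b) at_top"
proof -
  have mono: "y t1 \<le> y t2" if "0 \<le> t1" "t1 \<le> t2" for t1 t2
  proof (rule DERIV_nonneg_imp_increasing_open[OF that(2)])
    show "continuous_on {t1..t2} y" using cy by (rule continuous_on_subset) (use that in auto)
    fix x assume "t1 < x" "x < t2"
    then show "\<exists>d. (y has_real_derivative d) (at x) \<and> d \<ge> 0"
      using dy nn that by (metis less_eq_real_def order_le_less_trans)
  qed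
  show ?thesis
  proof (rule order_tendstoI)
    fix c assume "b < c"
    then show "eventually (\<lambda>t. y t < c) at_top"
      unfolding eventually_at_top_linorder using rng by (meson order_less_trans)
  next
    fix c assume cb: "c < b"
    have "\<exists>T\<ge>0. y T > c"
    proof (rule ccontr)
      assume "\<not> ?thesis"
      then have le: "\<And>t. t \<ge> 0 \<Longrightarrow> y t \<le> c" by (meson not_le)
      define c' where "c' = max c (y 0)"
      have c'b: "c' < b" unfolding c'_def using cb rng[of 0] by simp
      have rng2: "y t \<in> {y 0..c'}" if "t \<ge> 0" for t
        using mono[of 0 t] le[OF that] that unfolding c'_def by auto
      obtain x0 where x0: "x0 \<in> {y 0..c'}" and x0m: "\<And>x. x \<in> {y 0..c'} \<Longrightarrow> f x0 \<le> f x"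
        using continuous_attains_inf[of "{y 0..c'}" f] cf rng2[of 0]
        by (metis atLeastAtMost_iff compact_Icc continuous_on_subset empty_iff subset_UNIV order_refl)
      define m where "m = f x0"
      have m0: "m > 0" unfolding m_def using x0 a0 c'b by (intro pos) auto
      define t where "t = (c' - y 0) / m + 1"
      have t0: "t > 0" unfolding t_def using m0 rng2[of 0] by (metis add_pos_nonneg atLeastAtMost_iff diff_ge_0_iff_ge less_eq_real_def zero_le_divide_iff zero_less_one add.commute)
      have "y 0 - m * 0 \<le> y t - m * t"
      proof (rule DERIV_nonneg_imp_increasing_open[of 0 t "\<lambda>t. y t - m * t"])
        show "0 \<le> t" using t0 by simp
        show "continuous_on {0..t} (\<lambda>t. y t - m * t)"
          using cy by (intro continuous_intros) (auto intro: continuous_on_subset)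
        fix x assume x: "0 < x" "x < t"
        have "((\<lambda>t. y t - m * t) has_real_derivative f (y x) - m) (at x)"
          using dy[of x] x by (auto intro!: derivative_eq_intros)
        moreover have "f (y x) - m \<ge> 0" unfolding m_def using x0m rng2[of x] x by auto
        ultimately show "\<exists>d. ((\<lambda>t. y t - m * t) has_real_derivative d) (at x) \<and> d \<ge> 0" by blast
      qed
      then have "y t \<ge> y 0 + m * t" by simp
      moreover have "m * t = (c' - y 0) + m" unfolding t_def using m0 by (simp add: field_simps)
      ultimately have "y t > c'" using m0 by simp
      then show False using rng2[of t] t0 by simp
    qed
    then obtain T where T: "T \<ge> 0" "y T > c" by blast
    show "eventually (\<lambda>t. c < y t) at_top"
      unfolding eventually_at_top_linorder
      using T mono by (meson order_less_le_trans order_trans)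
  qed
qed

lemma conv_down:
  fixes y f :: "real \<Rightarrow> real"
  assumes cy: "continuous_on {0..} y"
    and dy: "\<And>t. t > 0 \<Longrightarrow> (y has_real_derivative f (y t)) (at t)"
    and cf: "continuous_on UNIV f"
    and neg: "\<And>x. a < x \<Longrightarrow> x < b \<Longrightarrow> f x < 0"
    and rng: "\<And>t. t \<ge> 0 \<Longrightarrow> y t > a"
    and np: "\<And>t. t \<ge> 0 \<Longrightarrow> f (y t) \<le> 0"
    and b0: "y 0 < b"
  shows "(y \<longlongrightarrow> a) at_top"
proof -
  have "((\<lambda>t. - y t) \<longlongrightarrow> - a) at_top"
  proof (rule conv_up[where f="\<lambda>x. - f (- x)" and a="-b"])
    show "continuous_on {0..} (\<lambda>t. - y t)" using cy by (intro continuous_intros)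
    show "continuous_on UNIV (\<lambda>x. - f (- x))"
      by (intro continuous_intros continuous_on_compose2[OF cf]) auto
    fix t :: real
    assume "t > 0"
    then show "((\<lambda>t. - y t) has_real_derivative - f (- (- y t))) (at t)"
      using dy[of t] by (auto intro!: derivative_eq_intros)
  qed (use neg rng np b0 in auto)
  then show ?thesis using tendsto_minus[of "\<lambda>t. - y t" "-a" at_top] by simp
qed

definition Hq :: "real \<Rightarrow> real \<Rightarrow> real \<Rightarrow> real \<Rightarrow> real \<Rightarrow> real" where
  "Hq s \<gamma> u e x = -(s+\<gamma>+u) + (s+2*\<gamma>)*(x+e) - \<gamma>*(x^2+x*e+e^2)"

lemma Fode_diff: "Fode s \<gamma> u x - Fode s \<gamma> u e = (x - e) * Hq s \<gamma> u e x"
  unfolding Fode_def Hq_def by (simp add: power2_eq_square algebra_simps)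

lemma Fode_cont: "continuous_on UNIV (Fode s \<gamma> u)"
  unfolding Fode_def by (intro continuous_intros)

locale solx =
  fixes s \<gamma> u y0 :: real and y :: "real \<Rightarrow> real"
  assumes sol: "is_solution s \<gamma> u y0 y"
begin

lemma cy: "continuous_on {0..} y"
  using sol unfolding is_solution_def using sol_basic(1) by blast

lemma dy: "t > 0 \<Longrightarrow> (y has_real_derivative Fode s \<gamma> u (y t)) (at t)"
  using sol unfolding is_solution_def using sol_basic(2) by blast

lemma y0: "y 0 = y0" using sol unfolding is_solution_def by blast

lemma uniqF:
  assumes "Fode s \<gamma> u e = 0" "T \<ge> 0"
  shows "y0 = e \<longleftrightarrow> y T = e"
proof -
  have "y 0 = e \<longleftrightarrow> y T = e"
  proof (rule uniq[OF cy dy _ _ assms(2)])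
    show "continuous_on UNIV (Hq s \<gamma> u e)" unfolding Hq_def by (intro continuous_intros)
    show "Fode s \<gamma> u x = (x - e) * Hq s \<gamma> u e x" for x
      using Fode_diff[of s \<gamma> u x e] assms(1) by simp
  qed auto
  then show ?thesis using y0 by simp
qed

lemma const:
  assumes "Fode s \<gamma> u e = 0" "y0 = e"
  shows "(y \<longlongrightarrow> e) at_top"
proof -
  have "eventually (\<lambda>t. y t = e) at_top"
    unfolding eventually_at_top_linorder using uniqF assms by blast
  then show ?thesis by (rule tendsto_eventually)
qed

lemma below:
  assumes "Fode s \<gamma> u e = 0" "y0 < e" "t \<ge> 0"
  shows "y t < e"
proof (rule ccontr)
  assume "\<not> y t < e"
  then have "y 0 \<le> e" "e \<le> y t" using assms y0 by auto
  then obtain x where "0 \<le> x" "x \<le> t" "y x = e"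
    using IVT'[of y 0 e t] assms(3) cy continuous_on_subset by (metis atLeast_iff atLeastAtMost_iff subsetI)
  then show False using uniqF[OF assms(1), of x] assms(2) by simp
qed

lemma above:
  assumes "Fode s \<gamma> u e = 0" "y0 > e" "t \<ge> 0"
  shows "y t > e"
proof (rule ccontr)
  assume "\<not> y t > e"
  then have "y 0 \<ge> e" "e \<ge> y t" using assms y0 by auto
  then obtain x where "0 \<le> x" "x \<le> t" "y x = e"
    using IVT2'[of y t e 0] assms(3) cy continuous_on_subset by (metis atLeast_iff atLeastAtMost_iff subsetI)
  then show False using uniqF[OF assms(1), of x] assms(2) by simp
qed

lemma up_from_below:
  assumes "Fode s \<gamma> u e = 0" "y0 < e" "\<And>x. x < e \<Longrightarrow> Fode s \<gamma> u x > 0"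
  shows "(y \<longlongrightarrow> e) at_top"
proof (rule conv_up[OF cy dy Fode_cont, where a="y0 - 1"])
  show "y t < e" if "t \<ge> 0" for t using below[OF assms(1,2) that] .
  then show "Fode s \<gamma> u (y t) \<ge> 0" if "t \<ge> 0" for t using assms(3) that less_imp_le by blast
qed (use assms y0 in auto)

lemma up_between:
  assumes "Fode s \<gamma> u a = 0" "Fode s \<gamma> u b = 0" "a < y0" "y0 < b"
    "\<And>x. a < x \<Longrightarrow> x < b \<Longrightarrow> Fode s \<gamma> u x > 0"
  shows "(y \<longlongrightarrow> b) at_top"
proof (rule conv_up[OF cy dy Fode_cont, where a=a])
  show "y t < b" if "t \<ge> 0" for t using below[OF assms(2,4) that] .
  then show "Fode s \<gamma> u (y t) \<ge> 0" if "t \<ge> 0" for t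
    using assms(5) above[OF assms(1,3) that] that less_imp_le by blast
qed (use assms y0 in auto)

lemma down_between:
  assumes "Fode s \<gamma> u a = 0" "Fode s \<gamma> u b = 0" "a < y0" "y0 < b"
    "\<And>x. a < x \<Longrightarrow> x < b \<Longrightarrow> Fode s \<gamma> u x < 0"
  shows "(y \<longlongrightarrow> a) at_top"
proof (rule conv_down[OF cy dy Fode_cont, where b=b])
  show "y t > a" if "t \<ge> 0" for t using above[OF assms(1,3) that] .
  then show "Fode s \<gamma> u (y t) \<le> 0" if "t \<ge> 0" for t
    using assms(5) below[OF assms(2,4) that] that less_imp_le by blast
qed (use assms y0 in auto)

end


lemma gform:
  assumes "\<gamma> > 0"
  shows "Fode s \<gamma> u x = (1-x) * (\<gamma>*(x - (1+s/\<gamma>)/2)^2 - \<gamma> * sigma s \<gamma> u/4)"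
  using assms unfolding Fode_def sigma_def by (simp add: field_simps power2_eq_square)

lemma g1:
  assumes "\<gamma> > 0"
  shows "\<gamma>*(1 - (1+s/\<gamma>)/2)^2 - \<gamma> * sigma s \<gamma> u/4 = u - s"
  using assms unfolding sigma_def by (simp add: field_simps power2_eq_square)

lemma fact3:
  assumes "\<gamma> > 0" "sigma s \<gamma> u \<ge> 0"
  shows "Fode s \<gamma> u x = \<gamma>*(1-x)*(x - ybar2 s \<gamma> u)*(x - ybar3 s \<gamma> u)"
proof -
  define c where "c = (1+s/\<gamma>)/2"
  define r where "r = sqrt (sigma s \<gamma> u)"
  have r2: "r^2 = sigma s \<gamma> u" unfolding r_def using assms(2) by simp
  have e2: "ybar2 s \<gamma> u = c - r/2" and e3: "ybar3 s \<gamma> u = c + r/2"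
    unfolding ybar2_def ybar3_def c_def r_def by (simp_all add: field_simps)
  have "(x - (c - r/2))*(x - (c + r/2)) = (x-c)^2 - r^2/4"
    by (simp add: power2_eq_square algebra_simps)
  then have "(x - ybar2 s \<gamma> u)*(x - ybar3 s \<gamma> u) = (x-c)^2 - sigma s \<gamma> u/4"
    unfolding e2 e3 r2 .
  note pe = this
  have "Fode s \<gamma> u x = (1-x) * (\<gamma> * ((x-c)^2 - sigma s \<gamma> u/4))"
    using gform[OF assms(1), of s u x] unfolding c_def by (simp add: right_diff_distrib)
  also have "\<dots> = (1-x) * (\<gamma> * ((x - ybar2 s \<gamma> u)*(x - ybar3 s \<gamma> u)))"
    unfolding pe ..
  finally show ?thesis by (simp add: mult.assoc mult.left_commute)
qed

lemma y23:
  assumes "sigma s \<gamma> u \<ge> 0"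
  shows "ybar2 s \<gamma> u = (1+s/\<gamma>)/2 - sqrt (sigma s \<gamma> u)/2"
    "ybar3 s \<gamma> u = (1+s/\<gamma>)/2 + sqrt (sigma s \<gamma> u)/2"
  unfolding ybar2_def ybar3_def by (simp_all add: field_simps)


lemma pos3a: "(g::real) > 0 \<Longrightarrow> x < 1 \<Longrightarrow> x < a \<Longrightarrow> x < b \<Longrightarrow> g*(1-x)*(x-a)*(x-b) > 0"
proof -
  assume h: "g > 0" "x < 1" "x < a" "x < b"
  have "(x-a)*(x-b) > 0" using h by (intro mult_neg_neg) auto
  moreover have "g*(1-x) > 0" using h by simp
  ultimately have "(g*(1-x))*((x-a)*(x-b)) > 0" by (metis mult_pos_pos)
  then show ?thesis by (simp add: mult.assoc)
qed

lemma pos3b: "(g::real) > 0 \<Longrightarrow> x < 1 \<Longrightarrow> a < x \<Longrightarrow> b < x \<Longrightarrow> g*(1-x)*(x-a)*(x-b) > 0"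
proof -
  assume h: "g > 0" "x < 1" "a < x" "b < x"
  have "(x-a)*(x-b) > 0" using h by (intro mult_pos_pos) auto
  moreover have "g*(1-x) > 0" using h by simp
  ultimately have "(g*(1-x))*((x-a)*(x-b)) > 0" by (metis mult_pos_pos)
  then show ?thesis by (simp add: mult.assoc)
qed

lemma neg3: "(g::real) > 0 \<Longrightarrow> x < 1 \<Longrightarrow> a < x \<Longrightarrow> x < b \<Longrightarrow> g*(1-x)*(x-a)*(x-b) < 0"
proof -
  assume h: "g > 0" "x < 1" "a < x" "x < b"
  have "(x-a)*(x-b) < 0" using h by (intro mult_pos_neg) auto
  moreover have "g*(1-x) > 0" using h by simp
  ultimately have "(g*(1-x))*((x-a)*(x-b)) < 0" by (metis mult_pos_neg)
  then show ?thesis by (simp add: mult.assoc)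
qed

lemma sigma_ucheck:
  assumes "\<gamma> > 0"
  shows "sigma s \<gamma> u = 4 * (ucheck s \<gamma> - u) / \<gamma>"
  using assms unfolding sigma_def ucheck_def by (simp add: field_simps power2_eq_square)

lemma sq_lt_abs: "(a::real)^2 < b^2 \<Longrightarrow> b \<ge> 0 \<Longrightarrow> \<bar>a\<bar> < b"
  by (metis abs_le_square_iff abs_of_nonneg not_le)

lemma sq_le_abs: "(a::real)^2 \<le> b^2 \<Longrightarrow> b \<ge> 0 \<Longrightarrow> \<bar>a\<bar> \<le> b"
  by (metis abs_le_square_iff abs_of_nonneg)


theorem corollary2p4:
  fixes s \<gamma> u y0 :: real and y :: "real \<Rightarrow> real"
  assumes "s > 0" and "\<gamma> > 0" and "u > 0"
    and "y0 \<in> {0..1}"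
    and "is_solution s \<gamma> u y0 y"
  shows
   "(((0 < u \<and> u < s) \<or> (u = s \<and> s < \<gamma>)) \<longrightarrow>
       (y0 \<in> {0..<1} \<longrightarrow> (y \<longlongrightarrow> ybar2 s \<gamma> u) at_top) \<and>
       (y0 = 1 \<longrightarrow> (y \<longlongrightarrow> ybar1) at_top))
  \<and> ((s < \<gamma> \<and> s < u \<and> u \<le> ucheck s \<gamma>) \<longrightarrow>
       (y0 \<in> {0..<ybar3 s \<gamma> u} \<longrightarrow> (y \<longlongrightarrow> ybar2 s \<gamma> u) at_top) \<and>
       (y0 = ybar3 s \<gamma> u \<longrightarrow> (y \<longlongrightarrow> ybar3 s \<gamma> u) at_top) \<and>
       (y0 \<in> {ybar3 s \<gamma> u<..ybar1} \<longrightarrow> (y \<longlongrightarrow> ybar1) at_top))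
  \<and> ((u > ucheck s \<gamma> \<or> (s \<ge> \<gamma> \<and> s \<le> u \<and> u \<le> ucheck s \<gamma>)) \<longrightarrow>
       (y \<longlongrightarrow> ybar1) at_top)"
proof -
  interpret solx s \<gamma> u y0 y by unfold_locales (rule assms(5))
  have g0: "\<gamma> > 0" by fact
  define c where "c = (1 + s/\<gamma>)/2"
  define r where "r = sqrt (sigma s \<gamma> u)"
  have F1: "Fode s \<gamma> u 1 = 0" unfolding Fode_def by simp
  have g1': "\<gamma>*(1 - c)^2 - \<gamma> * sigma s \<gamma> u/4 = u - s" unfolding c_def by (rule g1[OF g0])
  have yy: "sigma s \<gamma> u \<ge> 0 \<Longrightarrow> ybar2 s \<gamma> u = c - r/2 \<and> ybar3 s \<gamma> u = c + r/2"
    unfolding c_def r_def using y23 by blast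
  have r0: "r \<ge> 0" if "sigma s \<gamma> u \<ge> 0" unfolding r_def using that by simp
  have rsq: "sigma s \<gamma> u \<ge> 0 \<Longrightarrow> (r/2)^2 = sigma s \<gamma> u / 4"
    unfolding r_def by (simp add: power_divide)
  have eq2: "Fode s \<gamma> u (ybar2 s \<gamma> u) = 0" if "sigma s \<gamma> u \<ge> 0"
    using fact3[OF g0 that] by simp
  have eq3: "Fode s \<gamma> u (ybar3 s \<gamma> u) = 0" if "sigma s \<gamma> u \<ge> 0"
    using fact3[OF g0 that] by simp
  have sig_iff: "sigma s \<gamma> u \<ge> 0 \<longleftrightarrow> u \<le> ucheck s \<gamma>"
    using sigma_ucheck[OF g0, of s u] g0 by (simp add: zero_le_divide_iff)
  have y0r: "0 \<le> y0" "y0 \<le> 1" using assms(4) by auto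
  have stable: "(y \<longlongrightarrow> e) at_top"
    if e0: "Fode s \<gamma> u e = 0" and e1: "e < 1" and y01: "y0 < 1"
      and pb: "\<And>x. x < e \<Longrightarrow> Fode s \<gamma> u x > 0"
      and nb: "\<And>x. e < x \<Longrightarrow> x < 1 \<Longrightarrow> Fode s \<gamma> u x < 0" for e
  proof -
    consider "y0 < e" | "y0 = e" | "e < y0" by linarith
    then show ?thesis
    proof cases
      case 1 then show ?thesis using up_from_below e0 pb by blast
    next
      case 2 then show ?thesis using const e0 by blast
    next
      case 3 then show ?thesis using down_between[OF e0 F1 3 y01 nb] by blast
    qed
  qed
  have to1: "(y \<longlongrightarrow> 1) at_top" if pb: "\<And>x. x < 1 \<Longrightarrow> Fode s \<gamma> u x > 0"
  proof (cases "y0 = 1")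
    case True then show ?thesis using const F1 by blast
  next
    case False then have "y0 < 1" using y0r by simp
    then show ?thesis using up_from_below F1 pb by blast
  qed
  have P1: "(y0 \<in> {0..<1} \<longrightarrow> (y \<longlongrightarrow> ybar2 s \<gamma> u) at_top) \<and>
       (y0 = 1 \<longrightarrow> (y \<longlongrightarrow> ybar1) at_top)"
    if h: "(0 < u \<and> u < s) \<or> (u = s \<and> s < \<gamma>)"
  proof -
    have key: "sigma s \<gamma> u \<ge> 0 \<and> ybar2 s \<gamma> u < 1 \<and> 1 \<le> ybar3 s \<gamma> u"
    proof (cases "u < s")
      case True
      then have "\<gamma>*(1 - c)^2 < \<gamma> * (sigma s \<gamma> u/4)" using g1' by simp
      then have lt: "(1 - c)^2 < sigma s \<gamma> u/4" using g0 by simp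
      then have sg: "sigma s \<gamma> u \<ge> 0"
        using zero_le_power2[of "1 - c"] by linarith
      have "\<bar>1 - c\<bar> < r/2" using lt rsq[OF sg] r0[OF sg] by (intro sq_lt_abs) auto
      then have "1 - c < r/2" "c - 1 < r/2" by linarith+
      then show ?thesis using yy[OF sg] sg by auto
    next
      case False
      then have us: "u = s" "s < \<gamma>" using h by auto
      have "sigma s \<gamma> u = (1 - s/\<gamma>)^2" unfolding sigma_def us(1)
        using g0 by (simp add: power2_eq_square field_simps)
      moreover have "1 - s/\<gamma> > 0" using us g0 by simp
      ultimately have sg: "sigma s \<gamma> u \<ge> 0" and rr: "r = 1 - s/\<gamma>" unfolding r_def by auto
      have "c - r/2 = s/\<gamma>" "c + r/2 = 1" unfolding rr c_def by (simp_all add: field_simps)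
      moreover have "s/\<gamma> < 1" using us g0 by simp
      ultimately show ?thesis using yy[OF sg] sg by simp
    qed
    then have sg: "sigma s \<gamma> u \<ge> 0" and k: "ybar2 s \<gamma> u < 1" "1 \<le> ybar3 s \<gamma> u" by auto
    have "(y \<longlongrightarrow> ybar2 s \<gamma> u) at_top" if "y0 < 1"
    proof (rule stable[OF eq2[OF sg] k(1) that])
      fix x assume "x < ybar2 s \<gamma> u"
      then show "Fode s \<gamma> u x > 0" unfolding fact3[OF g0 sg] using k
        by (intro pos3a g0) auto
    next
      fix x assume "ybar2 s \<gamma> u < x" "x < 1"
      then show "Fode s \<gamma> u x < 0" unfolding fact3[OF g0 sg] using k
        by (intro neg3 g0) auto
    qed
    then show ?thesis using const F1 unfolding ybar1_def by auto
  qed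
  have P2: "(y0 \<in> {0..<ybar3 s \<gamma> u} \<longrightarrow> (y \<longlongrightarrow> ybar2 s \<gamma> u) at_top) \<and>
       (y0 = ybar3 s \<gamma> u \<longrightarrow> (y \<longlongrightarrow> ybar3 s \<gamma> u) at_top) \<and>
       (y0 \<in> {ybar3 s \<gamma> u<..ybar1} \<longrightarrow> (y \<longlongrightarrow> ybar1) at_top)"
    if h: "s < \<gamma> \<and> s < u \<and> u \<le> ucheck s \<gamma>"
  proof -
    have sg: "sigma s \<gamma> u \<ge> 0" using sig_iff h by simp
    have c1: "c < 1" unfolding c_def using h g0 by (simp add: field_simps)
    have "\<gamma> * (sigma s \<gamma> u/4) < \<gamma>*(1 - c)^2" using g1' h by simp
    then have "(r/2)^2 < (1-c)^2" using g0 rsq[OF sg] by simp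
    then have "\<bar>r/2\<bar> < 1 - c" using c1 by (intro sq_lt_abs) auto
    then have y3: "ybar3 s \<gamma> u < 1" and y23: "ybar2 s \<gamma> u \<le> ybar3 s \<gamma> u"
      using yy[OF sg] r0[OF sg] by auto
    have Fpos: "Fode s \<gamma> u x > 0" if "x < ybar2 s \<gamma> u" for x
      unfolding fact3[OF g0 sg] using that y3 y23 by (intro pos3a g0) auto
    have Fneg: "Fode s \<gamma> u x < 0" if "ybar2 s \<gamma> u < x" "x < ybar3 s \<gamma> u" for x
      unfolding fact3[OF g0 sg] using that y3 y23 by (intro neg3 g0) auto
    have Fpos2: "Fode s \<gamma> u x > 0" if "ybar3 s \<gamma> u < x" "x < 1" for x
      unfolding fact3[OF g0 sg] using that y3 y23 by (intro pos3b g0) auto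
    have A: "(y \<longlongrightarrow> ybar2 s \<gamma> u) at_top" if "y0 < ybar3 s \<gamma> u"
    proof -
      consider "y0 < ybar2 s \<gamma> u" | "y0 = ybar2 s \<gamma> u" | "ybar2 s \<gamma> u < y0" by linarith
      then show ?thesis
      proof cases
        case 1 then show ?thesis using up_from_below eq2[OF sg] Fpos by blast
      next
        case 2 then show ?thesis using const eq2[OF sg] by blast
      next
        case 3 then show ?thesis using down_between[OF eq2[OF sg] eq3[OF sg] 3 that Fneg] by blast
      qed
    qed
    have B: "(y \<longlongrightarrow> 1) at_top" if "ybar3 s \<gamma> u < y0" "y0 \<le> 1"
    proof (cases "y0 = 1")
      case True then show ?thesis using const F1 by blast
    next
      case False then have "y0 < 1" using that by simp
      then show ?thesis using up_between[OF eq3[OF sg] F1 that(1) _ Fpos2] by blast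
    qed
    show ?thesis using A B const eq3[OF sg] unfolding ybar1_def by auto
  qed
  have P3: "(y \<longlongrightarrow> ybar1) at_top"
    if h: "u > ucheck s \<gamma> \<or> (s \<ge> \<gamma> \<and> s \<le> u \<and> u \<le> ucheck s \<gamma>)"
  proof -
    have "Fode s \<gamma> u x > 0" if x1: "x < 1" for x
    proof (cases "u > ucheck s \<gamma>")
      case True
      then have sn: "sigma s \<gamma> u < 0" using sig_iff by simp
      have "\<gamma>*(x - (1+s/\<gamma>)/2)^2 - \<gamma> * sigma s \<gamma> u/4 > 0"
        proof -
        have "\<gamma>*(x - (1+s/\<gamma>)/2)^2 \<ge> 0" using g0 by simp
        moreover have "\<gamma> * sigma s \<gamma> u < 0" using sn g0 by (simp add: mult_pos_neg)
        ultimately show ?thesis by linarith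
      qed
      then show ?thesis unfolding gform[OF g0] using x1 by simp
    next
      case False
      then have hh: "s \<ge> \<gamma>" "s \<le> u" "u \<le> ucheck s \<gamma>" using h by auto
      have sg: "sigma s \<gamma> u \<ge> 0" using sig_iff hh by simp
      have c1: "c \<ge> 1" unfolding c_def using hh g0 by (simp add: field_simps)
      have "\<gamma> * (sigma s \<gamma> u/4) \<le> \<gamma>*(1 - c)^2" using g1' hh by simp
      then have "(r/2)^2 \<le> (c - 1)^2" using g0 rsq[OF sg] by (simp add: power2_commute)
      then have "\<bar>r/2\<bar> \<le> c - 1" using c1 by (intro sq_le_abs) auto
      then have y2: "1 \<le> ybar2 s \<gamma> u" and y3: "1 \<le> ybar3 s \<gamma> u"
        using yy[OF sg] r0[OF sg] by auto
      show ?thesis unfolding fact3[OF g0 sg] using x1 y2 y3 by (intro pos3a g0) auto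
    qed
    then show ?thesis using to1 unfolding ybar1_def by blast
  qed
  show ?thesis using P1 P2 P3 by blast
qed

end
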